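(* For every integer $n\ge 5$, every $0<r<1/2$, and every convex $n$-gon $K$, we have $$\frac{\Delta(K_r)}{\Delta(K)}\ge 1-2r.$$
   Context: Let $K=A_1A_2\ldots A_n$ be a convex polygon with vertices listed counterclockwise, indices taken modulo $n$. For fixed $0<r\le 1$, let $B_k$ be the point on the edge $A_{k+1}A_{k+2}$ with $A_{k+1}B_k/A_{k+1}A_{k+2}=r$, and let $K_r$ be the $n$-gon bounded by the segments $A_kB_k$, $k=1,\ldots,n$. $\Delta(\cdot)$ denotes area. *)

theory Defs
  imports "HOL-Analysis.Analysis"
begin

text \<open>Points of the plane are pairs of reals. Polygons are given by a vertex
function on nat, read cyclically: vertex k is A (k mod n); index 0 plays the role
of the paper's index 1.\<close>

definition cross2 :: "real \<times> real \<Rightarrow> real \<times> real \<Rightarrow> real" where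
  "cross2 u v = fst u * snd v - snd u * fst v"

definition vtx :: "nat \<Rightarrow> (nat \<Rightarrow> real \<times> real) \<Rightarrow> nat \<Rightarrow> real \<times> real" where
  "vtx n A k = A (k mod n)"

definition convex_ccw_polygon :: "nat \<Rightarrow> (nat \<Rightarrow> real \<times> real) \<Rightarrow> bool" where
  "convex_ccw_polygon n A \<longleftrightarrow> n \<ge> 3 \<and>
     (\<forall>i<n. \<forall>j<n. j \<noteq> i \<and> j \<noteq> (i + 1) mod n \<longrightarrow>
        cross2 (vtx n A (i + 1) - vtx n A i) (vtx n A j - vtx n A i) > 0)"

definition polygon_area :: "nat \<Rightarrow> (nat \<Rightarrow> real \<times> real) \<Rightarrow> real" where
  "polygon_area n P = (1/2) * (\<Sum>k<n. cross2 (vtx n P k) (vtx n P (k + 1)))"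

definition Bpt :: "nat \<Rightarrow> (nat \<Rightarrow> real \<times> real) \<Rightarrow> real \<Rightarrow> nat \<Rightarrow> real \<times> real" where
  "Bpt n A r k = vtx n A (k + 1) + r *\<^sub>R (vtx n A (k + 2) - vtx n A (k + 1))"

definition Kr_vertex :: "nat \<Rightarrow> (nat \<Rightarrow> real \<times> real) \<Rightarrow> real \<Rightarrow> nat \<Rightarrow> real \<times> real" where
  "Kr_vertex n A r k = (THE p. p \<in> closed_segment (vtx n A k) (Bpt n A r k) \<and>
                               p \<in> closed_segment (vtx n A (k + 1)) (Bpt n A r (k + 1)))"

definition area_K :: "nat \<Rightarrow> (nat \<Rightarrow> real \<times> real) \<Rightarrow> real" where
  "area_K n A = polygon_area n A"

definition area_Kr :: "nat \<Rightarrow> (nat \<Rightarrow> real \<times> real) \<Rightarrow> real \<Rightarrow> real" where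
  "area_Kr n A r = polygon_area n (Kr_vertex n A r)"

end

theory Submission
  imports Defs
begin

definition tri :: "real \<times> real \<Rightarrow> real \<times> real \<Rightarrow> real \<times> real \<Rightarrow> real" where
  "tri a b c = cross2 (b - a) (c - a)"

lemma vtx_cong: "i mod n = j mod n \<Longrightarrow> vtx n A i = vtx n A j"
  by (simp add: vtx_def)

lemma vtx_add_n: "vtx n A (k + n) = vtx n A k"
  by (simp add: vtx_def)

lemma vtx_mod: "vtx n A (k mod n) = vtx n A k"
  by (simp add: vtx_def)

lemma vtx_modadd: "vtx n A (k mod n + j) = vtx n A (k + j)"
  by (simp add: vtx_def mod_add_left_eq)

lemma mod_off_ne_lt: "(x::nat) < y \<Longrightarrow> y < n \<Longrightarrow> (k + x) mod n \<noteq> (k + y) mod n"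
proof
  assume a: "x < y" "y < n" "(k + x) mod n = (k + y) mod n"
  then have "n dvd (k + y) - (k + x)" using mod_eq_dvd_iff_nat[of "k + x" "k + y" n] by simp
  then have "n dvd y - x" by simp
  moreover have "0 < y - x" "y - x < n" using a by auto
  ultimately show False using nat_dvd_not_less by blast
qed

lemma mod_off_ne: "(x::nat) < n \<Longrightarrow> y < n \<Longrightarrow> x \<noteq> y \<Longrightarrow> (k + x) mod n \<noteq> (k + y) mod n"
proof -
  assume a: "x < n" "y < n" "x \<noteq> y"
  show ?thesis
  proof (cases "x < y")
    case True then show ?thesis using mod_off_ne_lt a by blast
  next
    case False then have "y < x" using a by simp
    then show ?thesis using mod_off_ne_lt[of y x n k] a by metis
  qed
qed

lemma mod_off_ne0: "0 < (y::nat) \<Longrightarrow> y < n \<Longrightarrow> (k + y) mod n \<noteq> k mod n"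
  using mod_off_ne[of 0 n y k] by simp

lemma edge_pos:
  assumes cv: "convex_ccw_polygon n A"
    and h1: "j mod n \<noteq> i mod n" and h2: "j mod n \<noteq> (i + 1) mod n"
  shows "cross2 (vtx n A (i + 1) - vtx n A i) (vtx n A j - vtx n A i) > 0"
proof -
  have n3: "n \<ge> 3" using cv by (simp add: convex_ccw_polygon_def)
  have e: "(i mod n + 1) mod n = (i + 1) mod n" by (metis mod_add_left_eq)
  have "i mod n < n" "j mod n < n" using n3 by auto
  then have "cross2 (vtx n A (i mod n + 1) - vtx n A (i mod n)) (vtx n A (j mod n) - vtx n A (i mod n)) > 0"
    using cv h1 h2 e unfolding convex_ccw_polygon_def by auto
  then show ?thesis by (simp only: vtx_mod vtx_modadd)
qed

lemma cross_id: "cross2 x y * cross2 w z + cross2 y z * cross2 w x + cross2 z x * cross2 w y = 0"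
  by (simp add: cross2_def algebra_simps)

lemma tri_edge: "tri a b c = cross2 (c - b) (a - b)"
  by (simp add: tri_def cross2_def algebra_simps)

lemma cross_anti: "cross2 x y = - cross2 y x"
  by (simp add: cross2_def)

lemma tri_pos:
  assumes cv: "convex_ccw_polygon n A" and p: "0 < p" and pq: "p < q" and qn: "q < n"
  shows "tri (vtx n A k) (vtx n A (k + p)) (vtx n A (k + q)) > 0"
proof -
  have main: "\<And>d. p + 1 + d < n \<Longrightarrow> tri (vtx n A k) (vtx n A (k + p)) (vtx n A (k + (p + 1 + d))) > 0"
  proof -
    fix d show "p + 1 + d < n \<Longrightarrow> tri (vtx n A k) (vtx n A (k + p)) (vtx n A (k + (p + 1 + d))) > 0"
    proof (induction d)
      case 0
      have "cross2 (vtx n A (k + p + 1) - vtx n A (k + p)) (vtx n A k - vtx n A (k + p)) > 0"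
        apply (rule edge_pos[OF cv])
        using mod_off_ne0[of p n k] mod_off_ne0[of "p+1" n k] 0 p by (auto simp: add.assoc)
      then show ?case by (simp add: tri_edge add.assoc)
    next
      case (Suc d)
      define q where "q = p + 1 + d"
      have q1: "q + 1 < n" using Suc.prems q_def by simp
      define w where "w = vtx n A (k + 1) - vtx n A k"
      define x where "x = vtx n A (k + p) - vtx n A k"
      define y where "y = vtx n A (k + q) - vtx n A k"
      define z where "z = vtx n A (k + (q + 1)) - vtx n A k"
      have cxy: "cross2 x y > 0" using Suc q_def x_def y_def by (simp add: tri_def)
      have cwx: "cross2 w x \<ge> 0"
      proof (cases "p = 1")
        case True then show ?thesis by (simp add: w_def x_def cross2_def)
      next
        case False
        have "cross2 (vtx n A (k + 1) - vtx n A k) (vtx n A (k + p) - vtx n A k) > 0"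
          apply (rule edge_pos[OF cv])
          using mod_off_ne0[of p n k] mod_off_ne[of p n 1 k] False p q1 q_def by auto
        then show ?thesis by (simp add: w_def x_def)
      qed
      have cwy: "cross2 w y > 0"
        unfolding w_def y_def
        apply (rule edge_pos[OF cv])
        using mod_off_ne0[of q n k] mod_off_ne[of q n 1 k] p q1 q_def by auto
      have cwz: "cross2 w z > 0"
        unfolding w_def z_def
        apply (rule edge_pos[OF cv])
        using mod_off_ne0[of "q+1" n k] mod_off_ne[of "q+1" n 1 k] p q1 q_def by auto
      have "cross2 (vtx n A (k + q + 1) - vtx n A (k + q)) (vtx n A k - vtx n A (k + q)) > 0"
        apply (rule edge_pos[OF cv])
        using mod_off_ne0[of q n k] mod_off_ne0[of "q+1" n k] p q1 q_def by (auto simp: add.assoc)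
      then have cyz: "cross2 y z > 0"
        using tri_edge[of "vtx n A k" "vtx n A (k + q)" "vtx n A (k + q + 1)"]
        by (simp add: y_def z_def tri_def add.assoc)
      have idt: "cross2 x y * cross2 w z + cross2 y z * cross2 w x + cross2 z x * cross2 w y = 0"
        by (rule cross_id)
      have "cross2 x y * cross2 w z > 0" using cxy cwz by simp
      moreover have "cross2 y z * cross2 w x \<ge> 0" using cyz cwx by simp
      ultimately have "cross2 z x * cross2 w y < 0" using idt by linarith
      then have "cross2 z x < 0" using cwy by (simp add: mult_less_0_iff)
      then have "cross2 x z > 0" using cross_anti[of x z] by linarith
      then show ?case by (simp add: tri_def x_def z_def q_def)
    qed
  qed
  obtain d where "q = p + 1 + d" using pq by (metis less_imp_Suc_add add_Suc_right Suc_eq_plus1 add.commute add.left_commute)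
  then show ?thesis using main qn by simp
qed

lemma sum_shift1:
  fixes g :: "nat \<Rightarrow> real"
  assumes "\<And>k. g (k + n) = g k"
  shows "(\<Sum>k<n. g (Suc k)) = (\<Sum>k<n. g k)"
proof -
  have "(\<Sum>k<Suc n. g k) = g 0 + (\<Sum>k<n. g (Suc k))" by (rule sum.lessThan_Suc_shift)
  moreover have "(\<Sum>k<Suc n. g k) = (\<Sum>k<n. g k) + g n" by simp
  moreover have "g n = g 0" using assms[of 0] by simp
  ultimately show ?thesis by linarith
qed

lemma sum_shift:
  fixes g :: "nat \<Rightarrow> real" and s n :: nat
  assumes "\<And>k. g (k + n) = g k"
  shows "(\<Sum>k<n. g (s + k)) = (\<Sum>k<n. g k)"
proof (induction s)
  case 0 then show ?case by simp
next
  case (Suc s)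
  have h: "\<And>k. g (s + (k + n)) = g (s + k)" using assms by (metis add.assoc)
  have "(\<Sum>k<n. g (s + Suc k)) = (\<Sum>k<n. g (s + k))"
    by (rule sum_shift1[of "\<lambda>k. g (s + k)" n, OF h])
  moreover have "\<And>k. Suc s + k = s + Suc k" by simp
  ultimately have "(\<Sum>k<n. g (Suc s + k)) = (\<Sum>k<n. g (s + k))" by simp
  then show ?case using Suc by simp
qed

lemma split2: "(\<Sum>i<2*(m::nat). f i) = (\<Sum>j<m. f (2*j)) + (\<Sum>j<m. f (2*j+1))"
  by (induction m) (simp_all add: algebra_simps)

lemma chainL: "(\<Sum>i<2*(m::nat). cross2 (q i) (q (i+1))) =
   (\<Sum>j<m. cross2 (q (2*j)) (q (2*j+2))) + (\<Sum>j<m. tri (q (2*j)) (q (2*j+1)) (q (2*j+2)))"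
proof (induction m)
  case 0 then show ?case by simp
next
  case (Suc m)
  have e: "cross2 (q (2*m)) (q (2*m+1)) + cross2 (q (2*m+1)) (q (2*m+2)) =
     cross2 (q (2*m)) (q (2*m+2)) + tri (q (2*m)) (q (2*m+1)) (q (2*m+2))"
    by (simp add: tri_def cross2_def algebra_simps)
  have "(\<Sum>i<2*Suc m. cross2 (q i) (q (i+1))) = (\<Sum>i<2*m. cross2 (q i) (q (i+1))) + 
     cross2 (q (2*m)) (q (2*m+1)) + cross2 (q (2*m+1)) (q (2*m+2))"
    by (simp add: numeral_2_eq_2)
  then show ?case using Suc e by simp
qed

lemma fan: "(\<Sum>j<(M::nat). cross2 (w j) (w (j+1))) + cross2 (w M) (w 0) = (\<Sum>j<M. tri (w 0) (w j) (w (j+1)))"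
proof (induction M)
  case 0 then show ?case by (simp add: cross2_def)
next
  case (Suc M)
  have "cross2 (w M) (w (M+1)) + cross2 (w (M+1)) (w 0) - cross2 (w M) (w 0) = tri (w 0) (w M) (w (M+1))"
    by (simp add: tri_def cross2_def algebra_simps)
  then show ?case using Suc by simp
qed

lemma tri_diff: "tri x b c - tri y b c = cross2 (x - y) (b - c)"
  by (simp add: tri_def cross2_def algebra_simps)

lemma tri_rot: "tri a b c = tri b c a"
  by (simp add: tri_def cross2_def algebra_simps)

lemma cross_lin: "cross2 u (x - y) = cross2 u x - cross2 u y"
  by (simp add: cross2_def algebra_simps)

lemma good_k:
  assumes cv: "convex_ccw_polygon n A" and n5: "n \<ge> 5"
  shows "\<exists>k. cross2 (vtx n A (k+1) - vtx n A k) (vtx n A (k+3) - vtx n A (k+2)) \<ge> 0"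
proof (rule ccontr)
  assume "\<not> ?thesis"
  then have neg: "\<And>k. cross2 (vtx n A (k+1) - vtx n A k) (vtx n A (k+3) - vtx n A (k+2)) < 0"
    by (meson not_le)
  define v where "v = vtx n A"
  define u where "u = v 3 - v 2"
  define g where "g = (\<lambda>j. cross2 u (v j))"
  have gd: "\<And>i j. g i - g j = cross2 u (v i - v j)" by (simp add: g_def cross_lin)
  have "cross2 (v 1 - v 0) u < 0" using neg[of 0] by (simp add: u_def v_def numeral_2_eq_2 numeral_3_eq_3)
  then have g10: "g 0 < g 1" using gd[of 1 0] cross_anti[of u "v 1 - v 0"] by linarith
  have "cross2 u (v 5 - v 4) < 0" using neg[of 2] by (simp add: u_def v_def)
  then have g54: "g 5 < g 4" using gd[of 5 4] by linarith
  have vn: "v n = v 0" "v (n+1) = v 1" using vtx_add_n[of n A 0] vtx_add_n[of n A 1]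
    by (simp_all add: v_def add.commute)
  define J where "J = {4..n+1}"
  have finJ: "finite (g ` J)" and neJ: "g ` J \<noteq> {}" using n5 by (auto simp: J_def)
  obtain j where jJ: "j \<in> J" and jmin: "g j = Min (g ` J)"
    using Min_in[OF finJ neJ] by auto
  have jle: "\<And>i. i \<in> J \<Longrightarrow> g j \<le> g i" using jmin finJ by simp
  have "j \<noteq> 4" using jle[of 5] g54 n5 by (auto simp: J_def)
  moreover have "j \<noteq> n + 1" using jle[of n] g10 vn n5 by (auto simp: J_def g_def)
  ultimately have j5: "5 \<le> j" and jn: "j \<le> n" using jJ by (auto simp: J_def)
  have "j - 1 \<in> J" "j + 1 \<in> J" using j5 jn by (auto simp: J_def)
  then have gjm: "g j \<le> g (j - 1)" and gjp: "g j \<le> g (j + 1)" using jle by auto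
  define a where "a = v 2"
  define p where "p = v (j - 1)"
  define q where "q = v j"
  define s where "s = v (j + 1)"
  have e1: "2 + (j - 3) = j - 1" "2 + (j - 2) = j" "2 + (j - 1) = j + 1" "j - 1 + 1 = j" "j - 1 + 2 = j + 1"
    using j5 by auto
  have t1: "tri a p q > 0" using tri_pos[OF cv, of "j-3" "j-2" 2] j5 jn e1 by (simp add: a_def p_def q_def v_def)
  have t2: "tri a q s > 0" using tri_pos[OF cv, of "j-2" "j-1" 2] j5 jn e1 by (simp add: a_def s_def q_def v_def)
  have t3: "tri p q s > 0" using tri_pos[OF cv, of 1 2 "j-1"] j5 jn e1 by (simp add: p_def s_def q_def v_def)
  have t4: "tri (v 2) (v 3) q > 0" using tri_pos[OF cv, of 1 "j-2" 2] j5 jn e1 by (simp add: q_def v_def)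
  have idt: "cross2 u (a - q) * cross2 (p - q) (s - q) =
      cross2 (a - q) (s - q) * cross2 u (p - q) + cross2 (p - q) (a - q) * cross2 u (s - q)"
    by (simp add: cross2_def algebra_simps)
  have s1: "cross2 (p - q) (s - q) = - tri p q s" by (simp add: tri_def cross2_def algebra_simps)
  have s2: "cross2 (a - q) (s - q) = - tri a q s" by (simp add: tri_def cross2_def algebra_simps)
  have s3: "cross2 (p - q) (a - q) = - tri a p q" by (simp add: tri_def cross2_def algebra_simps)
  have s4: "cross2 u (a - q) = - tri (v 2) (v 3) q" by (simp add: u_def a_def tri_def cross2_def algebra_simps)
  have s5: "cross2 u (p - q) \<ge> 0" using gd[of "j-1" j] gjm by (simp add: p_def q_def)
  have s6: "cross2 u (s - q) \<ge> 0" using gd[of "j+1" j] gjp by (simp add: s_def q_def)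
  have "cross2 u (a - q) * cross2 (p - q) (s - q) > 0" using s1 s4 t3 t4 by simp
  moreover have "cross2 (a - q) (s - q) * cross2 u (p - q) \<le> 0"
    using s2 t2 s5 by (simp add: mult_nonpos_nonneg)
  moreover have "cross2 (p - q) (a - q) * cross2 u (s - q) \<le> 0"
    using s3 t1 s6 by (simp add: mult_nonpos_nonneg)
  ultimately show False using idt by linarith
qed

lemma vtx_per: "vtx n A (k + n + j) = vtx n A (k + j)"
  by (metis add.commute add.left_commute vtx_add_n)

lemma Sh_rot: "(\<Sum>i<n. cross2 (vtx n A (s+i)) (vtx n A (s+i+1))) = (\<Sum>i<n. cross2 (vtx n A i) (vtx n A (i+1)))"
proof -
  have "\<And>k. cross2 (vtx n A (k + n)) (vtx n A (k + n + 1)) = cross2 (vtx n A k) (vtx n A (k + 1))"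
    by (simp only: vtx_add_n vtx_per)
  then show ?thesis using sum_shift[of "\<lambda>k. cross2 (vtx n A k) (vtx n A (k+1))" n s] by simp
qed

lemma E_rot: "(\<Sum>i<n. tri (vtx n A (s+i)) (vtx n A (s+i+1)) (vtx n A (s+i+2))) = (\<Sum>i<n. tri (vtx n A i) (vtx n A (i+1)) (vtx n A (i+2)))"
proof -
  have "\<And>k. tri (vtx n A (k + n)) (vtx n A (k + n + 1)) (vtx n A (k + n + 2)) = tri (vtx n A k) (vtx n A (k + 1)) (vtx n A (k + 2))"
    by (simp only: vtx_add_n vtx_per)
  then show ?thesis using sum_shift[of "\<lambda>k. tri (vtx n A k) (vtx n A (k+1)) (vtx n A (k+2))" n s] by (simp add: add.assoc)
qed

lemma fan_term:
  assumes cv: "convex_ccw_polygon n A" and h: "2*j+2 < n"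
  shows "tri (vtx n A s) (vtx n A (s+2*j)) (vtx n A (s+2*j+2)) \<ge> 0"
proof (cases "j = 0")
  case True then show ?thesis by (simp add: tri_def cross2_def)
next
  case False
  then show ?thesis using tri_pos[OF cv, of "2*j" "2*j+2" s] h by (simp add: add.assoc)
qed

lemma fan_id: "(\<Sum>j<M. cross2 (vtx n A (s+2*j)) (vtx n A (s+2*j+2))) + cross2 (vtx n A (s+2*M)) (vtx n A s)
   = (\<Sum>j<M. tri (vtx n A s) (vtx n A (s+2*j)) (vtx n A (s+2*j+2)))"
  using fan[of "\<lambda>j. vtx n A (s+2*j)" M] by (simp add: algebra_simps)

lemma fan_nonneg:
  assumes cv: "convex_ccw_polygon n A" and h: "2*M < n"
  shows "(\<Sum>j<M. cross2 (vtx n A (s+2*j)) (vtx n A (s+2*j+2))) + cross2 (vtx n A (s+2*M)) (vtx n A s) \<ge> 0"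
  unfolding fan_id
  by (rule sum_nonneg, rule fan_term[OF cv]) (use h in auto)

lemma fan_ge:
  assumes cv: "convex_ccw_polygon n A" and h: "2*M < n" and M2: "M \<ge> 2"
  shows "(\<Sum>j<M. cross2 (vtx n A (s+2*j)) (vtx n A (s+2*j+2))) + cross2 (vtx n A (s+2*M)) (vtx n A s)
     \<ge> tri (vtx n A s) (vtx n A (s+2*(M-1))) (vtx n A (s+2*M))"
proof -
  obtain M' where M': "M = Suc M'" using M2 by (cases M) auto
  have "(\<Sum>j<M'. tri (vtx n A s) (vtx n A (s+2*j)) (vtx n A (s+2*j+2))) \<ge> 0"
    by (rule sum_nonneg, rule fan_term[OF cv]) (use h M' in auto)
  moreover have "s + 2*M' + 2 = s + 2*M" using M' by simp
  ultimately show ?thesis unfolding fan_id using M' by simp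
qed

lemma chain_rot:
  "(\<Sum>i<2*m. cross2 (vtx n A (s+i)) (vtx n A (s+i+1))) =
   (\<Sum>j<m. cross2 (vtx n A (s+2*j)) (vtx n A (s+2*j+2))) +
   (\<Sum>j<m. tri (vtx n A (s+2*j)) (vtx n A (s+2*j+1)) (vtx n A (s+2*j+2)))"
  using chainL[of "\<lambda>i. vtx n A (s+i)" m] by (simp add: add.assoc)

lemma half_even:
  assumes cv: "convex_ccw_polygon n A" and nm: "n = 2*m" and m2: "m \<ge> 2"
  shows "(\<Sum>j<m. tri (vtx n A (s+2*j)) (vtx n A (s+2*j+1)) (vtx n A (s+2*j+2)))
          \<le> (\<Sum>i<n. cross2 (vtx n A i) (vtx n A (i+1)))"
proof -
  obtain m' where m': "m = Suc m'" using m2 by (cases m) auto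
  have "(\<Sum>j<m. cross2 (vtx n A (s+2*j)) (vtx n A (s+2*j+2))) =
     (\<Sum>j<m'. cross2 (vtx n A (s+2*j)) (vtx n A (s+2*j+2))) + cross2 (vtx n A (s+2*m')) (vtx n A (s+2*m'+2))"
    using m' by simp
  moreover have "vtx n A (s+2*m'+2) = vtx n A s"
    using vtx_add_n[of n A s] nm m' by (simp add: add.commute add.left_commute)
  moreover have "(\<Sum>j<m'. cross2 (vtx n A (s+2*j)) (vtx n A (s+2*j+2))) + cross2 (vtx n A (s+2*m')) (vtx n A s) \<ge> 0"
    by (rule fan_nonneg[OF cv]) (use nm m' in simp)
  ultimately have "(\<Sum>j<m. cross2 (vtx n A (s+2*j)) (vtx n A (s+2*j+2))) \<ge> 0" by simp
  moreover have "(\<Sum>i<n. cross2 (vtx n A i) (vtx n A (i+1))) = (\<Sum>i<2*m. cross2 (vtx n A (s+i)) (vtx n A (s+i+1)))"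
    using Sh_rot[of n A s] nm by simp
  ultimately show ?thesis unfolding chain_rot by simp
qed

lemma half_odd:
  assumes nm: "n = 2*m+1"
  shows "(\<Sum>i<n. cross2 (vtx n A i) (vtx n A (i+1))) =
     ((\<Sum>j<m. cross2 (vtx n A (s+2*j)) (vtx n A (s+2*j+2))) + cross2 (vtx n A (s+2*m)) (vtx n A s))
     + (\<Sum>j<m. tri (vtx n A (s+2*j)) (vtx n A (s+2*j+1)) (vtx n A (s+2*j+2)))"
proof -
  have "(\<Sum>i<n. cross2 (vtx n A i) (vtx n A (i+1))) = (\<Sum>i<Suc (2*m). cross2 (vtx n A (s+i)) (vtx n A (s+i+1)))"
    using Sh_rot[of n A s] nm by simp
  also have "\<dots> = (\<Sum>i<2*m. cross2 (vtx n A (s+i)) (vtx n A (s+i+1))) + cross2 (vtx n A (s+2*m)) (vtx n A (s+2*m+1))"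
    by simp
  also have "vtx n A (s+2*m+1) = vtx n A s"
    using vtx_add_n[of n A s] nm by (simp add: add.commute add.left_commute)
  finally show ?thesis unfolding chain_rot by simp
qed

lemma ears:
  assumes cv: "convex_ccw_polygon n A" and n5: "n \<ge> 5"
  shows "(\<Sum>i<n. tri (vtx n A i) (vtx n A (i+1)) (vtx n A (i+2))) \<le> 2 * (\<Sum>i<n. cross2 (vtx n A i) (vtx n A (i+1)))"
proof (cases "even n")
  case True
  then obtain m where nm: "n = 2*m" by blast
  have m2: "m \<ge> 2" using nm n5 by simp
  have h0: "(\<Sum>j<m. tri (vtx n A (2*j)) (vtx n A (2*j+1)) (vtx n A (2*j+2)))
          \<le> (\<Sum>i<n. cross2 (vtx n A i) (vtx n A (i+1)))"
    using half_even[OF cv nm m2, of 0] by simp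
  have h1: "(\<Sum>j<m. tri (vtx n A (2*j+1)) (vtx n A (2*j+1+1)) (vtx n A (2*j+1+2)))
          \<le> (\<Sum>i<n. cross2 (vtx n A i) (vtx n A (i+1)))"
    using half_even[OF cv nm m2, of 1] by (simp add: add.commute add.left_commute)
  show ?thesis
    using split2[of "\<lambda>i. tri (vtx n A i) (vtx n A (i+1)) (vtx n A (i+2))" m] h0 h1 nm
    by (simp add: add.assoc)
next
  case False
  then obtain m where nm: "n = 2*m+1" using oddE by blast
  have m2: "m \<ge> 2" using nm n5 by simp
  obtain k where gk: "cross2 (vtx n A (k+1) - vtx n A k) (vtx n A (k+3) - vtx n A (k+2)) \<ge> 0"
    using good_k[OF cv n5] by blast
  define s where "s = k + 2"
  define Sh where "Sh = (\<Sum>i<n. cross2 (vtx n A i) (vtx n A (i+1)))"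
  have F0: "(\<Sum>j<m. cross2 (vtx n A (s+2*j)) (vtx n A (s+2*j+2))) + cross2 (vtx n A (s+2*m)) (vtx n A s) \<ge> 0"
    by (rule fan_nonneg[OF cv]) (use nm in simp)
  have F1: "(\<Sum>j<m. cross2 (vtx n A (s+1+2*j)) (vtx n A (s+1+2*j+2))) + cross2 (vtx n A (s+1+2*m)) (vtx n A (s+1))
      \<ge> tri (vtx n A (s+1)) (vtx n A (s+1+2*(m-1))) (vtx n A (s+1+2*m))"
    by (rule fan_ge[OF cv _ m2]) (use nm in simp)
  have H0: "Sh = ((\<Sum>j<m. cross2 (vtx n A (s+2*j)) (vtx n A (s+2*j+2))) + cross2 (vtx n A (s+2*m)) (vtx n A s))
     + (\<Sum>j<m. tri (vtx n A (s+2*j)) (vtx n A (s+2*j+1)) (vtx n A (s+2*j+2)))"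
    unfolding Sh_def by (rule half_odd[OF nm])
  have H1: "Sh = ((\<Sum>j<m. cross2 (vtx n A (s+1+2*j)) (vtx n A (s+1+2*j+2))) + cross2 (vtx n A (s+1+2*m)) (vtx n A (s+1)))
     + (\<Sum>j<m. tri (vtx n A (s+1+2*j)) (vtx n A (s+1+2*j+1)) (vtx n A (s+1+2*j+2)))"
    unfolding Sh_def by (rule half_odd[OF nm])
  define E where "E = (\<lambda>i. tri (vtx n A i) (vtx n A (i+1)) (vtx n A (i+2)))"
  have S1: "(\<Sum>i<n. E i) = (\<Sum>i<2*m. E (s+i)) + E (s + 2*m)"
    using E_rot[of n A s] nm by (simp add: E_def add.assoc)
  have S2: "(\<Sum>i<2*m. E (s+i)) = (\<Sum>j<m. E (s+2*j)) + (\<Sum>j<m. E (s+(2*j+1)))"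
    by (rule split2)
  have S3: "(\<Sum>j<m. E (s+2*j)) = (\<Sum>j<m. tri (vtx n A (s+2*j)) (vtx n A (s+2*j+1)) (vtx n A (s+2*j+2)))"
    by (simp add: E_def add.assoc)
  have S4: "(\<Sum>j<m. E (s+(2*j+1))) = (\<Sum>j<m. tri (vtx n A (s+1+2*j)) (vtx n A (s+1+2*j+1)) (vtx n A (s+1+2*j+2)))"
    by (simp add: E_def add.assoc add.commute add.left_commute)
  have i1: "s + 2*m = (k+1) + n" "s + 2*m + 1 = (k+2) + n" "s + 2*m + 2 = (k+3) + n"
       "s + 1 + 2*(m-1) = k + n" "s + 1 + 2*m = (k+2) + n" "s + 1 = k + 3"
    using nm m2 s_def by auto
  have Elast: "E (s + 2*m) = tri (vtx n A (k+1)) (vtx n A (k+2)) (vtx n A (k+3))"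
    unfolding E_def using i1 by (simp only: vtx_add_n)
  have Tlast: "tri (vtx n A (s+1)) (vtx n A (s+1+2*(m-1))) (vtx n A (s+1+2*m))
      = tri (vtx n A (k+3)) (vtx n A k) (vtx n A (k+2))"
    using i1 by (simp only: vtx_add_n)
  have "tri (vtx n A (k+3)) (vtx n A k) (vtx n A (k+2)) - tri (vtx n A (k+1)) (vtx n A (k+2)) (vtx n A (k+3))
     = cross2 (vtx n A (k+1) - vtx n A k) (vtx n A (k+3) - vtx n A (k+2))"
    by (simp add: tri_def cross2_def algebra_simps)
  then have "E (s + 2*m) \<le> tri (vtx n A (s+1)) (vtx n A (s+1+2*(m-1))) (vtx n A (s+1+2*m))"
    using Elast Tlast gk by linarith
  then show ?thesis
    using S1 S2 S3 S4 H0 H1 F0 F1 unfolding E_def Sh_def[symmetric] by linarith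
qed

lemma decomp:
  assumes D: "cross2 d1 d2 \<noteq> 0"
  shows "w = (cross2 w d2 / cross2 d1 d2) *\<^sub>R d1 + (cross2 d1 w / cross2 d1 d2) *\<^sub>R d2"
proof -
  have n1: "cross2 w d2 * fst d1 + cross2 d1 w * fst d2 = fst w * cross2 d1 d2" by (simp add: cross2_def algebra_simps)
  have n2: "cross2 w d2 * snd d1 + cross2 d1 w * snd d2 = snd w * cross2 d1 d2" by (simp add: cross2_def algebra_simps)
  have f1: "(cross2 w d2 / cross2 d1 d2) * fst d1 + (cross2 d1 w / cross2 d1 d2) * fst d2 = fst w"
    using n1 D by (simp add: divide_simps)
  have f2: "(cross2 w d2 / cross2 d1 d2) * snd d1 + (cross2 d1 w / cross2 d1 d2) * snd d2 = snd w"
    using n2 D by (simp add: divide_simps)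
  show ?thesis using f1 f2 by (simp add: prod_eq_iff)
qed

lemma cross_comb: "cross2 (u *\<^sub>R x - v *\<^sub>R y) y = u * cross2 x y"
  by (simp add: cross2_def algebra_simps)

lemma Kr_in:
  assumes cv: "convex_ccw_polygon n A" and n5: "n \<ge> 5" and r0: "0 < r" and r1: "r < 1/2"
  shows "Kr_vertex n A r k \<in> closed_segment (vtx n A k) (Bpt n A r k) \<and>
         Kr_vertex n A r k \<in> closed_segment (vtx n A (k + 1)) (Bpt n A r (k + 1))"
proof -
  define a where "a = vtx n A k"
  define b where "b = vtx n A (k+1)"
  define c where "c = vtx n A (k+2)"
  define d where "d = vtx n A (k+3)"
  define B1 where "B1 = Bpt n A r k"
  define B2 where "B2 = Bpt n A r (k+1)"
  have B1e: "B1 = b + r *\<^sub>R (c - b)" by (simp add: B1_def Bpt_def b_def c_def)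
  have B2e: "B2 = c + r *\<^sub>R (d - c)" by (simp add: B2_def Bpt_def c_def d_def numeral_3_eq_3 numeral_2_eq_2)
  have Z: "tri a b c > 0" using tri_pos[OF cv, of 1 2 k] n5 by (simp add: a_def b_def c_def)
  have W: "tri a b d > 0" using tri_pos[OF cv, of 1 3 k] n5 by (simp add: a_def b_def d_def)
  have Y: "tri b c d > 0" using tri_pos[OF cv, of 1 2 "k+1"] n5
    by (simp add: b_def c_def d_def add.assoc numeral_3_eq_3 numeral_2_eq_2)
  define d1 where "d1 = B1 - a"
  define d2 where "d2 = B2 - b"
  define X where "X = cross2 (b - a) d2"
  define D where "D = cross2 d1 d2"
  have Xe: "X = (1 - r) * tri a b c + r * tri a b d"
    by (simp add: X_def d2_def B2e tri_def cross2_def algebra_simps)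
  have De: "D = X + r^2 * tri b c d"
    by (simp add: X_def D_def d1_def d2_def B1e B2e tri_def cross2_def algebra_simps power2_eq_square)
  have "(1 - r) * tri a b c > 0" using r1 Z by simp
  moreover have "r * tri a b d > 0" using r0 W by simp
  ultimately have Xp: "X > 0" unfolding Xe by linarith
  have "r^2 * tri b c d > 0" using r0 Y by simp
  then have Dp: "D > 0" using De Xp by linarith
  have cw1: "cross2 d1 (b - a) = - (r * tri a b c)"
    by (simp add: d1_def B1e tri_def cross2_def algebra_simps)
  define al where "al = X / D"
  define nu where "nu = r * tri a b c / D"
  have XD: "X \<le> D" using De Y by simp
  have al01: "0 \<le> al" "al \<le> 1" using Xp Dp XD unfolding al_def by auto
  have "r * tri a b c \<le> (1 - r) * tri a b c" using r1 Z by (simp add: mult_right_mono)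
  then have "r * tri a b c \<le> X + r^2 * tri b c d" using Xe W Y r0 by (simp add: add_increasing2)
  then have nu01: "0 \<le> nu" "nu \<le> 1" using Dp De Z r0 unfolding nu_def by auto
  have dec: "b - a = al *\<^sub>R d1 - nu *\<^sub>R d2"
    using decomp[of d1 d2 "b - a"] Dp cw1 unfolding al_def nu_def X_def D_def by simp
  define P where "P = a + al *\<^sub>R d1"
  have P1: "P = (1 - al) *\<^sub>R a + al *\<^sub>R B1" by (simp add: P_def d1_def algebra_simps)
  have P2: "P = (1 - nu) *\<^sub>R b + nu *\<^sub>R B2"
  proof -
    have "P = a + (b - a) + nu *\<^sub>R d2" using dec by (simp add: P_def algebra_simps)
    then show ?thesis by (simp add: d2_def algebra_simps)
  qed
  have inP: "P \<in> closed_segment a B1 \<and> P \<in> closed_segment b B2"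
    using P1 P2 al01 nu01 by (auto simp: in_segment)
  have uniq: "p = P" if hp: "p \<in> closed_segment a B1 \<and> p \<in> closed_segment b B2" for p
  proof -
    obtain u where u: "p = (1 - u) *\<^sub>R a + u *\<^sub>R B1" using hp by (auto simp: in_segment)
    obtain v where v: "p = (1 - v) *\<^sub>R b + v *\<^sub>R B2" using hp by (auto simp: in_segment)
    have "u *\<^sub>R d1 - v *\<^sub>R d2 = b - a"
    proof -
      have "(1 - u) *\<^sub>R a + u *\<^sub>R B1 = (1 - v) *\<^sub>R b + v *\<^sub>R B2" using u v by simp
      then show ?thesis by (simp add: d1_def d2_def algebra_simps)
    qed
    then have "u * D = X" using cross_comb[of u d1 v d2] unfolding X_def D_def by simp
    then have "u = al" using Dp unfolding al_def by (simp add: field_simps)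
    then show ?thesis using u P1 by simp
  qed
  have "Kr_vertex n A r k = P"
    unfolding Kr_vertex_def a_def[symmetric] b_def[symmetric] B1_def[symmetric] B2_def[symmetric]
    by (rule the_equality) (rule inP, rule uniq)
  then show ?thesis using inP by (simp add: a_def b_def B1_def B2_def)
qed

lemma Kr_mod: "Kr_vertex n A r (k mod n) = Kr_vertex n A r k"
  by (simp only: Kr_vertex_def Bpt_def vtx_mod vtx_modadd add.assoc)

lemma Kr_per: "Kr_vertex n A r (k + n) = Kr_vertex n A r k"
  by (metis Kr_mod mod_add_self2)

lemma seg_col:
  assumes "x \<in> closed_segment a b" "y \<in> closed_segment a b"
  shows "tri a x y = 0"
proof -
  obtain u where u: "x = (1 - u) *\<^sub>R a + u *\<^sub>R b" using assms(1) by (auto simp: in_segment)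
  obtain v where v: "y = (1 - v) *\<^sub>R a + v *\<^sub>R b" using assms(2) by (auto simp: in_segment)
  have hx: "x - a = u *\<^sub>R (b - a)" and hy: "y - a = v *\<^sub>R (b - a)" using u v by (simp_all add: algebra_simps)
  have "tri a x y = cross2 (u *\<^sub>R (b - a)) (v *\<^sub>R (b - a))" by (simp only: tri_def hx hy)
  then show ?thesis by (simp add: cross2_def algebra_simps)
qed

lemma Sh_pos:
  assumes cv: "convex_ccw_polygon n A"
  shows "(\<Sum>i<n. cross2 (vtx n A i) (vtx n A (i+1))) > 0"
proof -
  have n3: "n \<ge> 3" using cv by (simp add: convex_ccw_polygon_def)
  obtain N where N: "n = Suc N" using n3 by (cases n) auto
  have "(\<Sum>i<n. cross2 (vtx n A i) (vtx n A (i+1))) = (\<Sum>i<N. cross2 (vtx n A i) (vtx n A (i+1))) + cross2 (vtx n A N) (vtx n A 0)"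
    using N vtx_add_n[of n A 0] by simp
  also have "\<dots> = (\<Sum>j<N. tri (vtx n A 0) (vtx n A j) (vtx n A (j+1)))"
    by (rule fan)
  moreover have "(\<Sum>j<N. tri (vtx n A 0) (vtx n A j) (vtx n A (j+1))) > 0"
  proof (rule sum_pos2[of "{..<N}" 1])
    show "finite {..<N}" by simp
    show "1 \<in> {..<N}" using N n3 by simp
    show "0 < tri (vtx n A 0) (vtx n A 1) (vtx n A (1 + 1))"
      using tri_pos[OF cv, of 1 2 0] n3 by simp
    show "0 \<le> tri (vtx n A 0) (vtx n A i) (vtx n A (i + 1))" if "i \<in> {..<N}" for i
    proof -
      from that have iN: "i < N" by simp
      show "0 \<le> tri (vtx n A 0) (vtx n A i) (vtx n A (i + 1))"
      proof (cases "i = 0")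
        case True then show ?thesis by (simp add: tri_def cross2_def)
      next
        case False then show ?thesis using tri_pos[OF cv, of i "i+1" 0] iN N by simp
      qed
    qed
  qed
  ultimately show ?thesis by simp
qed

theorem theorem5p1:
  fixes n :: nat and A :: "nat \<Rightarrow> real \<times> real" and r :: real
  assumes "n \<ge> 5" and "0 < r" and "r < 1/2"
    and "convex_ccw_polygon n A"
  shows "area_Kr n A r / area_K n A \<ge> 1 - 2 * r"
proof -
  note n5 = assms(1) and r0 = assms(2) and r1 = assms(3) and cv = assms(4)
  define v where "v = vtx n A"
  define P where "P = Kr_vertex n A r"
  define Sh where "Sh = (\<Sum>i<n. cross2 (v i) (v (i+1)))"
  define ShP where "ShP = (\<Sum>i<n. cross2 (P i) (P (i+1)))"
  define E where "E = (\<lambda>i. tri (v i) (v (i+1)) (v (i+2)))"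
  define tm where "tm = (\<lambda>i. cross2 (v (i+1) - v i) (P i - v i))"
  have aK: "area_K n A = Sh / 2" by (simp add: area_K_def polygon_area_def Sh_def v_def)
  have vP: "\<And>k. vtx n P k = P k" by (simp add: vtx_def P_def Kr_mod)
  have aKr: "area_Kr n A r = ShP / 2" by (simp add: area_Kr_def polygon_area_def ShP_def vP P_def[symmetric])
  have Shp: "Sh > 0" using Sh_pos[OF cv] by (simp add: Sh_def v_def)
  have ear: "(\<Sum>i<n. E i) \<le> 2 * Sh" using ears[OF cv n5] by (simp add: E_def Sh_def v_def)
  have tmle: "tm k \<le> r * E k" for k
  proof -
    have "P k \<in> closed_segment (v k) (Bpt n A r k)" using Kr_in[OF cv n5 r0 r1, of k] by (simp add: P_def v_def)
    then obtain u where u: "P k = (1 - u) *\<^sub>R v k + u *\<^sub>R Bpt n A r k" "0 \<le> u" "u \<le> 1"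
      by (auto simp: in_segment)
    have B: "Bpt n A r k = v (k+1) + r *\<^sub>R (v (k+2) - v (k+1))" by (simp add: Bpt_def v_def)
    have "tm k = u * (r * E k)" unfolding tm_def E_def u(1) B
      by (simp add: tri_def cross2_def algebra_simps)
    moreover have "E k > 0" using tri_pos[OF cv, of 1 2 k] n5 by (simp add: E_def v_def)
    ultimately show ?thesis using u r0 by (simp add: mult_left_le_one_le)
  qed
  have step: "cross2 (v k) (v (k+1)) - cross2 (P k) (P (k+1)) = tm k + cross2 (P (k+1)) (v (k+1)) - cross2 (P k) (v k)" for k
  proof -
    have s1: "P k \<in> closed_segment (v (k+1)) (Bpt n A r (k+1))" using Kr_in[OF cv n5 r0 r1, of k] by (simp add: P_def v_def)
    have s2: "P (k+1) \<in> closed_segment (v (k+1)) (Bpt n A r (k+1))" using Kr_in[OF cv n5 r0 r1, of "k+1"] by (simp add: P_def v_def)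
    have "tri (v (k+1)) (P k) (P (k+1)) = 0" by (rule seg_col[OF s1 s2])
    then show ?thesis by (simp add: tm_def tri_def cross2_def algebra_simps)
  qed
  have per: "\<And>k. cross2 (P (k + n)) (v (k + n)) = cross2 (P k) (v k)"
    by (simp add: P_def v_def Kr_per vtx_add_n)
  have shift: "(\<Sum>k<n. cross2 (P (Suc k)) (v (Suc k))) = (\<Sum>k<n. cross2 (P k) (v k))"
    by (rule sum_shift1[of "\<lambda>k. cross2 (P k) (v k)" n, OF per])
  have "Sh - ShP = (\<Sum>k<n. cross2 (v k) (v (k+1)) - cross2 (P k) (P (k+1)))"
    by (simp add: Sh_def ShP_def sum_subtractf)
  also have "\<dots> = (\<Sum>k<n. tm k + cross2 (P (k+1)) (v (k+1)) - cross2 (P k) (v k))"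
    by (rule sum.cong) (rule refl, rule step)
  also have "\<dots> = (\<Sum>k<n. tm k) + (\<Sum>k<n. cross2 (P (Suc k)) (v (Suc k))) - (\<Sum>k<n. cross2 (P k) (v k))"
    by (simp add: sum_subtractf sum.distrib)
  also have "\<dots> = (\<Sum>k<n. tm k)" using shift by simp
  also have "\<dots> \<le> (\<Sum>k<n. r * E k)" by (rule sum_mono) (rule tmle)
  also have "\<dots> = r * (\<Sum>k<n. E k)" by (simp add: sum_distrib_left)
  also have "\<dots> \<le> r * (2 * Sh)" using ear r0 by simp
  finally have "ShP \<ge> (1 - 2 * r) * Sh" by (simp add: algebra_simps)
  then show ?thesis unfolding aK aKr using Shp by (simp add: pos_le_divide_eq)
qed

end
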